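(* Let $w,u$ be integers with $w/2 \le u < w$, fix a sign, and let $q = 2^w - 2^u \pm 1$. Let $\lambda$ be a positive integer that is an integer multiple of $q$. Define $c = \lfloor \lambda / 2^w \rfloor$ and, for integers $x$, $$v(x) = \left\lfloor -\frac{x(2^u \mp 1)}{2^w} \right\rfloor, \qquad f(x) = x + v(x),$$ where $\mp$ is the sign opposite to the one chosen in $q$, so that $q = 2^w - (2^u \mp 1)$. Define the sequence $b_0 = c$ and $b_{i+1} = b_i + (c - f(b_i))$ for $i \ge 0$. Then there exists a finite $i \ge 0$ with $f(b_i) = c$. In other words, the loop "while $f(b_i)\neq c$: $b_{i+1}\gets b_i + (c-f(b_i))$" started from $b_0=c$ terminates after finitely many iterations.
   Context: This is the iterative part of a division algorithm ("Algorithm 1"). Its input is $\lambda$ and $q = 2^w - 2^u \pm 1$. It sets $c \gets \lfloor \lambda/2^w \rfloor$ and $b_0 \gets c$. While $f(b_i) \neq c$, it sets $b_{i+1} \gets b_i + (c - f(b_i))$. The last $b_i$ computed is called $b^*$. It then outputs $b = b^* + (\mathrm{LSB}(\lambda) \ \mathrm{XOR}\ \mathrm{LSB}(b^* ))$, where $\mathrm{LSB}$ denotes the least significant bit. *)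

theory Defs
  imports Complex_Main
begin

text \<open>Sign s \<in> {1,-1}; q = 2^w - 2^u + s, and d = 2^u - s, so q = 2^w - d.\<close>

definition modq :: "nat \<Rightarrow> nat \<Rightarrow> int \<Rightarrow> int" where
  "modq w u s = 2^w - 2^u + s"

definition vfun :: "nat \<Rightarrow> nat \<Rightarrow> int \<Rightarrow> int \<Rightarrow> int" where
  "vfun w u s x = \<lfloor>(-(of_int x * (2^u - of_int s)) / 2^w :: real)\<rfloor>"

definition ffun :: "nat \<Rightarrow> nat \<Rightarrow> int \<Rightarrow> int \<Rightarrow> int" where
  "ffun w u s x = x + vfun w u s x"

fun bseq :: "nat \<Rightarrow> nat \<Rightarrow> int \<Rightarrow> int \<Rightarrow> nat \<Rightarrow> int" where
  "bseq w u s c 0 = c"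
| "bseq w u s c (Suc i) = bseq w u s c i + (c - ffun w u s (bseq w u s c i))"

end

theory Submission
  imports Defs
begin

lemma vfun_div:
  "vfun w u s x = (-(x * (2^u - s))) div 2^w"
proof -
  have "(-(of_int x * (2^u - of_int s)) / 2^w :: real)
        = of_int (-(x * (2^u - s))) / of_int (2^w)" by simp
  then show ?thesis unfolding vfun_def by (simp only: floor_divide_of_int_eq)
qed

theorem theorem1:
  fixes w u :: nat and s lam :: int
  assumes "w \<le> 2 * u" and "u < w"
    and "s = 1 \<or> s = -1"
    and "lam > 0" and "modq w u s dvd lam"
  shows "\<exists>i. ffun w u s (bseq w u s \<lfloor>(of_int lam / 2^w :: real)\<rfloor> i)
             = \<lfloor>(of_int lam / 2^w :: real)\<rfloor>"
proof (rule ccontr)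
  define c where "c = \<lfloor>(of_int lam / 2^w :: real)\<rfloor>"
  define D :: int where "D = 2^u - s"
  define P :: int where "P = 2^w"
  define f where "f = ffun w u s"
  define b where "b = bseq w u s c"
  assume H: "\<not> (\<exists>i. ffun w u s (bseq w u s \<lfloor>(of_int lam / 2^w :: real)\<rfloor> i)
             = \<lfloor>(of_int lam / 2^w :: real)\<rfloor>)"
  hence H': "\<And>i. f (b i) \<noteq> c" unfolding f_def b_def c_def by blast
  have c0: "c \<ge> 0" unfolding c_def using assms(4) by simp
  have u1: "u \<ge> 1" using assms(1,2) by linarith
  have "(2::int)^u \<ge> 2^1" using u1 by (intro power_increasing) auto
  hence D1: "D \<ge> 1" unfolding D_def using assms(3) by auto
  have "(2::int)^w \<ge> 2^(u+1)" using assms(2) by (intro power_increasing) auto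
  hence DP: "D < P" unfolding D_def P_def using assms(3) \<open>(2::int)^u \<ge> 2^1\<close> by auto
  have P0: "P > 0" unfolding P_def by simp
  have fdef: "\<And>x. f x = x + (-(x * D)) div P"
    unfolding f_def ffun_def vfun_div D_def P_def by simp
  have fmono: "\<And>x n. n \<ge> 0 \<Longrightarrow> f (x + n) \<le> f x + n"
  proof -
    fix x n :: int assume "n \<ge> 0"
    hence "-((x+n)*D) \<le> -(x*D)" using D1 by (simp add: algebra_simps)
    hence "(-((x+n)*D)) div P \<le> (-(x*D)) div P" using P0 by (rule zdiv_mono1)
    thus "f (x + n) \<le> f x + n" unfolding fdef by simp
  qed
  have fle: "\<And>x. x \<ge> 0 \<Longrightarrow> f x \<le> x"
  proof -
    fix x :: int assume "x \<ge> 0"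
    hence "-(x*D) \<le> 0" using D1 by simp
    hence "(-(x*D)) div P \<le> 0" using P0 by (simp add: div_nonpos_pos_le0)
    thus "f x \<le> x" unfolding fdef by simp
  qed
  have fbound: "\<And>x. f x \<le> c \<Longrightarrow> x < P * (c + 1)"
  proof -
    fix x assume fx: "f x \<le> c"
    have "P * ((-(x*D)) div P) > -(x*D) - P"
      using P0 by (smt (verit) minus_mod_eq_mult_div pos_mod_bound)
    hence "P * f x > x * (P - D) - P" unfolding fdef by (simp add: algebra_simps)
    moreover have "P * f x \<le> P * c" using fx P0 by simp
    ultimately have A: "x * (P - D) < P * (c + 1)" by (simp add: algebra_simps)
    show "x < P * (c + 1)"
    proof (cases "x < 0")
      case True
      have "P * (c + 1) > 0" using P0 c0 by simp
      then show ?thesis using True by linarith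
    next
      case False
      have "x * 1 \<le> x * (P - D)" using False DP by (intro mult_left_mono) auto
      then show ?thesis using A by simp
    qed
  qed
  have inv: "\<And>i. f (b i) \<le> c \<and> b i \<ge> c + int i"
  proof -
    fix i show "f (b i) \<le> c \<and> b i \<ge> c + int i"
    proof (induction i)
      case 0
      then show ?case using fle[OF c0] unfolding b_def by simp
    next
      case (Suc i)
      have n1: "c - f (b i) \<ge> 1" using Suc H'[of i] by linarith
      have bs: "b (Suc i) = b i + (c - f (b i))" unfolding b_def f_def by simp
      have "f (b (Suc i)) \<le> f (b i) + (c - f (b i))"
        unfolding bs using n1 by (intro fmono) simp
      then show ?case using bs n1 Suc by simp
    qed
  qed
  define N where "N = nat (P * (c + 1))"
  have "b N < P * (c + 1)" using inv fbound by blast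
  moreover have "b N \<ge> c + int N" using inv by blast
  ultimately show False unfolding N_def using P0 c0 by simp
qed

end
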